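(* Let $P=\langle(\mathcal Q,\le),N\rangle$ be a possibilistic logic program. The collection Poss-ASP returned by the procedure $Poss\_Answer\_Sets(P)$ is the set of all possibilistic answer sets of $P$.
   Context: $(\mathcal Q,\le)$ is a finite lattice with top $\top_{\mathcal Q}$. A possibilistic (disjunctive) logic program is $P=\langle(\mathcal Q,\le),N\rangle$ with $N$ a finite set of clauses $r=\alpha:\mathcal A\leftarrow\mathcal B^+,not\ \mathcal B^-$ and constraints $\top_{\mathcal Q}:\ \leftarrow\mathcal B^+,not\ \mathcal B^-$; strongly negated atoms are fresh atoms; $n(r)=\alpha$, $P^*$ the set of underlying clauses; answer sets of $P^*$ in the Gelfond–Lifschitz sense (complementary atoms allowed). Reduct $P_S=\{n(r):(\mathcal A\cap S)\leftarrow\mathcal B^+\mid r\in N,\mathcal A\cap S\ne\emptyset,\mathcal B^-\cap S=\emptyset,\mathcal B^+\subseteq S\}$. A positive clause $\alpha:a_1\vee\dots\vee a_m\leftarrow b_1,\dots,b_k$ is turned into the possibilistic disjunction $(a_1\vee\dots\vee a_m\vee\sim b_1\vee\dots\vee\sim b_k\ \ \alpha)$. Rule (R): from $(c_1\ \alpha_1),(c_2\ \alpha_2)$ infer $(R(c_1,c_2)\ \mathrm{GLB}\{\alpha_1,\alpha_2\})$ with $R(c_1,c_2)$ a classical resolvent. Procedure $Poss\_Answer\_Sets(P)$: for each answer set $S$ of $P^*$, let $\mathcal C$ be the set of possibilistic disjunctions obtained from $P_S$; for each $a\in S$, search for a derivation by repeated application of (R) from $\mathcal C\cup\{(\sim a\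 \top_{\mathcal Q})\}$ of the empty clause with maximal value $\alpha$, and put $(a,\alpha)$ into $S'$; add $S'$ to Poss-ASP; return Poss-ASP. Possibilistic answer sets: let $\mathcal{PS}$ be the sets of pairs (atom, element of $\mathcal Q$) with each atom at most once, $M^*$ the atoms of $M$, $A\sqsubseteq B$ iff $A^*\subseteq B^*$ and $\gamma\le\delta$ whenever $(x,\gamma)\in A,(x,\delta)\in B$; $\vdash_{PL}$ is necessity-valued possibilistic-logic inference (clauses as weighted formulas, classical axioms weighted $\top_{\mathcal Q}$, rules $(\varphi\ \gamma),(\varphi\to\psi\ \delta)\vdash(\psi\ \mathrm{GLB}\{\gamma,\delta\})$ and $(\varphi\ \gamma),(\varphi\ \delta)\vdash(\varphi\ \epsilon)$ for $\epsilon\le\mathrm{GLB}\{\gamma,\delta\}$); $P\Vvdash_{PL}M$ iff $M^*$ is an answer set of $P^*$ and $P_{M^*}\vdash_{PL}(a\ \gamma)$ for all $(a,\gamma)\in M$; $M$ is a possibilistic answer set iff $M^*$ is an answer set of $P^*$, $P\Vvdash_{PL}M$ and no $M''\ne M$ in $\mathcal{PS}$ satisfies $M\sqsubseteq M''$ and $P\Vvdash_{PL}M''$. *)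

theory Defs
  imports Main
begin

text \<open>The lattice (Q,<=) is the type 'q of class finite, lattice, order_top; GLB is inf,
  the top element is top. A clause  alpha : A <- B+, not B-  is the tuple (alpha, A, B+, B-).
  A constraint is a clause with empty head (which must carry the weight top).\<close>

type_synonym ('q, 'a) poss_clause = "'q \<times> 'a set \<times> 'a set \<times> 'a set"

definition poss_program :: "('q::{finite,lattice,order_top}, 'a) poss_clause set \<Rightarrow> bool" where
  "poss_program N \<longleftrightarrow> finite N \<and>
     (\<forall>(\<alpha>, A, Bp, Bn) \<in> N. finite A \<and> finite Bp \<and> finite Bn \<and> (A = {} \<longrightarrow> \<alpha> = top))"

definition gl_reduct :: "('q, 'a) poss_clause set \<Rightarrow> 'a set \<Rightarrow> ('a set \<times> 'a set) set" where
  "gl_reduct N S = {(A, Bp). \<exists>\<alpha> Bn. (\<alpha>, A, Bp, Bn) \<in> N \<and> Bn \<inter> S = {}}"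

definition is_model :: "('a set \<times> 'a set) set \<Rightarrow> 'a set \<Rightarrow> bool" where
  "is_model R S \<longleftrightarrow> (\<forall>(A, Bp) \<in> R. Bp \<subseteq> S \<longrightarrow> A \<inter> S \<noteq> {})"

definition answer_set :: "('q, 'a) poss_clause set \<Rightarrow> 'a set \<Rightarrow> bool" where
  "answer_set N S \<longleftrightarrow> is_model (gl_reduct N S) S \<and>
     (\<forall>S'. S' \<subset> S \<longrightarrow> \<not> is_model (gl_reduct N S) S')"

subsection \<open>The possibilistic reduct P_S (positive weighted clauses (alpha, head, body))\<close>

definition poss_reduct :: "('q, 'a) poss_clause set \<Rightarrow> 'a set \<Rightarrow> ('q \<times> 'a set \<times> 'a set) set" where
  "poss_reduct N S = {(\<alpha>, A \<inter> S, Bp) | \<alpha> A Bp Bn.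
      (\<alpha>, A, Bp, Bn) \<in> N \<and> A \<inter> S \<noteq> {} \<and> Bn \<inter> S = {} \<and> Bp \<subseteq> S}"

datatype 'a lit = Pos 'a | Neg 'a

definition poss_disj :: "'q \<times> 'a set \<times> 'a set \<Rightarrow> 'a lit set \<times> 'q" where
  "poss_disj r = (case r of (\<alpha>, A, Bp) \<Rightarrow> (Pos ` A \<union> Neg ` Bp, \<alpha>))"

inductive res_deriv :: "('a lit set \<times> 'q::{finite,lattice,order_top}) set \<Rightarrow> 'a lit set \<Rightarrow> 'q \<Rightarrow> bool"
  for C where
  res_base: "(c, \<alpha>) \<in> C \<Longrightarrow> res_deriv C c \<alpha>"
| res_step: "res_deriv C c1 \<alpha>1 \<Longrightarrow> res_deriv C c2 \<alpha>2 \<Longrightarrow> Pos x \<in> c1 \<Longrightarrow> Neg x \<in> c2 \<Longrightarrow>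
     res_deriv C ((c1 - {Pos x}) \<union> (c2 - {Neg x})) (inf \<alpha>1 \<alpha>2)"

definition refutation_values :: "('q::{finite,lattice,order_top}, 'a) poss_clause set \<Rightarrow> 'a set \<Rightarrow> 'a \<Rightarrow> 'q set" where
  "refutation_values N S a =
     {\<beta>. res_deriv (poss_disj ` poss_reduct N S \<union> {({Neg a}, top)}) {} \<beta>}"

definition is_maximal_in :: "'q::order \<Rightarrow> 'q set \<Rightarrow> bool" where
  "is_maximal_in \<alpha> V \<longleftrightarrow> \<alpha> \<in> V \<and> (\<forall>\<beta>\<in>V. \<not> \<alpha> < \<beta>)"

text \<open>The output of the procedure Poss_Answer_Sets(P): one S' for each answer set S of P*
  and each admissible choice of a maximal refutation value for every atom of S.\<close>
definition poss_answer_sets_proc :: "('q::{finite,lattice,order_top}, 'a) poss_clause set \<Rightarrow> ('a \<times> 'q) set set" where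
  "poss_answer_sets_proc N = {S'. \<exists>S. answer_set N S \<and>
      (\<forall>a \<in> S. \<exists>!\<alpha>. (a, \<alpha>) \<in> S') \<and>
      (\<forall>(a, \<alpha>) \<in> S'. a \<in> S \<and> is_maximal_in \<alpha> (refutation_values N S a))}"

datatype 'a fml = FAtom 'a | FBot | FNeg "'a fml" | FAnd "'a fml" "'a fml"
  | FOr "'a fml" "'a fml" | FImp "'a fml" "'a fml"

primrec eval :: "('a \<Rightarrow> bool) \<Rightarrow> 'a fml \<Rightarrow> bool" where
  "eval v (FAtom a) = v a"
| "eval v FBot = False"
| "eval v (FNeg \<phi>) = (\<not> eval v \<phi>)"
| "eval v (FAnd \<phi> \<psi>) = (eval v \<phi> \<and> eval v \<psi>)"
| "eval v (FOr \<phi> \<psi>) = (eval v \<phi> \<or> eval v \<psi>)"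
| "eval v (FImp \<phi> \<psi>) = (eval v \<phi> \<longrightarrow> eval v \<psi>)"

definition tautology :: "'a fml \<Rightarrow> bool" where
  "tautology \<phi> \<longleftrightarrow> (\<forall>v. eval v \<phi>)"

definition list_of :: "'a set \<Rightarrow> 'a list" where
  "list_of S = (SOME xs. set xs = S \<and> distinct xs)"

definition clause_fml :: "'a set \<Rightarrow> 'a set \<Rightarrow> 'a fml" where
  "clause_fml A Bp = FImp (foldr (\<lambda>b \<phi>. FAnd (FAtom b) \<phi>) (list_of Bp) (FNeg FBot))
                          (foldr (\<lambda>a \<phi>. FOr (FAtom a) \<phi>) (list_of A) FBot)"

inductive pl_deriv :: "('q::{finite,lattice,order_top} \<times> 'a set \<times> 'a set) set \<Rightarrow> 'a fml \<Rightarrow> 'q \<Rightarrow> bool"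
  for R where
  pl_clause: "(\<alpha>, A, Bp) \<in> R \<Longrightarrow> pl_deriv R (clause_fml A Bp) \<alpha>"
| pl_axiom: "tautology \<phi> \<Longrightarrow> pl_deriv R \<phi> top"
| pl_mp: "pl_deriv R \<phi> \<gamma> \<Longrightarrow> pl_deriv R (FImp \<phi> \<psi>) \<delta> \<Longrightarrow> pl_deriv R \<psi> (inf \<gamma> \<delta>)"
| pl_weaken: "pl_deriv R \<phi> \<gamma> \<Longrightarrow> pl_deriv R \<phi> \<delta> \<Longrightarrow> \<epsilon> \<le> inf \<gamma> \<delta> \<Longrightarrow> pl_deriv R \<phi> \<epsilon>"

definition is_PS :: "('a \<times> 'q) set \<Rightarrow> bool" where
  "is_PS M \<longleftrightarrow> (\<forall>x \<gamma> \<delta>. (x, \<gamma>) \<in> M \<longrightarrow> (x, \<delta>) \<in> M \<longrightarrow> \<gamma> = \<delta>)"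

definition poss_le :: "('a \<times> 'q::order) set \<Rightarrow> ('a \<times> 'q) set \<Rightarrow> bool" where
  "poss_le A B \<longleftrightarrow> fst ` A \<subseteq> fst ` B \<and>
     (\<forall>x \<gamma> \<delta>. (x, \<gamma>) \<in> A \<longrightarrow> (x, \<delta>) \<in> B \<longrightarrow> \<gamma> \<le> \<delta>)"

definition poss_entails :: "('q::{finite,lattice,order_top}, 'a) poss_clause set \<Rightarrow> ('a \<times> 'q) set \<Rightarrow> bool" where
  "poss_entails N M \<longleftrightarrow> answer_set N (fst ` M) \<and>
     (\<forall>(a, \<gamma>) \<in> M. pl_deriv (poss_reduct N (fst ` M)) (FAtom a) \<gamma>)"

definition poss_answer_set :: "('q::{finite,lattice,order_top}, 'a) poss_clause set \<Rightarrow> ('a \<times> 'q) set \<Rightarrow> bool" where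
  "poss_answer_set N M \<longleftrightarrow> is_PS M \<and> answer_set N (fst ` M) \<and> poss_entails N M \<and>
     \<not> (\<exists>M''. is_PS M'' \<and> M'' \<noteq> M \<and> poss_le M M'' \<and> poss_entails N M'')"

end

theory Submission
  imports Defs
begin

fun lval :: "('a \<Rightarrow> bool) \<Rightarrow> 'a lit \<Rightarrow> bool" where
  "lval v (Pos a) = v a" | "lval v (Neg a) = (\<not> v a)"

fun atm :: "'a lit \<Rightarrow> 'a" where
  "atm (Pos a) = a" | "atm (Neg a) = a"

definition lsat :: "('a \<Rightarrow> bool) \<Rightarrow> 'a lit set \<Rightarrow> bool" where
  "lsat v c \<longleftrightarrow> (\<exists>l\<in>c. lval v l)"

lemma list_of_set: "finite S \<Longrightarrow> set (list_of S) = S"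
  unfolding list_of_def by (rule someI2_ex[OF finite_distinct_list]) auto

lemma eval_conj: "eval v (foldr (\<lambda>b \<phi>. FAnd (FAtom b) \<phi>) xs (FNeg FBot)) = (\<forall>b\<in>set xs. v b)"
  by (induction xs) auto

lemma eval_disj: "eval v (foldr (\<lambda>a \<phi>. FOr (FAtom a) \<phi>) xs FBot) = (\<exists>a\<in>set xs. v a)"
  by (induction xs) auto

lemma eval_clause: "finite A \<Longrightarrow> finite Bp \<Longrightarrow>
  eval v (clause_fml A Bp) = (Bp \<subseteq> {x. v x} \<longrightarrow> (\<exists>a\<in>A. v a))"
  by (auto simp: clause_fml_def eval_conj eval_disj list_of_set)

lemma lsat_poss_disj: "poss_disj (\<alpha>, A, Bp) = (d, \<beta>) \<Longrightarrow>
   lsat v d = ((\<exists>a\<in>A. v a) \<or> (\<exists>b\<in>Bp. \<not> v b))"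
  by (auto simp: lsat_def poss_disj_def intro: bexI[of _ "Pos _"] bexI[of _ "Neg _"])

subsection \<open>Possibilistic logic via cuts\<close>

definition ent :: "('q::order \<times> 'a set \<times> 'a set) set \<Rightarrow> 'q \<Rightarrow> 'a fml \<Rightarrow> bool" where
  "ent R \<gamma> \<phi> \<longleftrightarrow> (\<forall>v. (\<forall>c\<in>R. \<gamma> \<le> fst c \<longrightarrow> eval v (clause_fml (fst (snd c)) (snd (snd c)))) \<longrightarrow> eval v \<phi>)"

lemma pl_sound: "pl_deriv R \<phi> \<gamma> \<Longrightarrow> ent R \<gamma> \<phi>"
proof (induction rule: pl_deriv.induct)
  case (pl_clause \<alpha> A Bp)
  then show ?case unfolding ent_def by fastforce
next
  case (pl_axiom \<phi>)
  then show ?case unfolding ent_def tautology_def by auto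
next
  case (pl_mp \<phi> \<gamma> \<psi> \<delta>)
  show ?case unfolding ent_def
  proof (intro allI impI)
    fix v assume h: "\<forall>c\<in>R. inf \<gamma> \<delta> \<le> fst c \<longrightarrow> eval v (clause_fml (fst (snd c)) (snd (snd c)))"
    have "eval v \<phi>" using pl_mp.IH(1) h unfolding ent_def by (meson le_infI1)
    moreover have "eval v (FImp \<phi> \<psi>)" using pl_mp.IH(2) h unfolding ent_def by (meson le_infI2)
    ultimately show "eval v \<psi>" by simp
  qed
next
  case (pl_weaken \<phi> \<gamma> \<delta> \<epsilon>)
  show ?case unfolding ent_def
  proof (intro allI impI)
    fix v assume h: "\<forall>c\<in>R. \<epsilon> \<le> fst c \<longrightarrow> eval v (clause_fml (fst (snd c)) (snd (snd c)))"
    have "\<epsilon> \<le> \<gamma>" using pl_weaken.hyps(3) le_infE by blast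
    then show "eval v \<phi>" using pl_weaken.IH(1) h unfolding ent_def by (meson order_trans)
  qed
qed

definition imps :: "('q \<times> 'a set \<times> 'a set) list \<Rightarrow> 'a fml \<Rightarrow> 'a fml" where
  "imps ws \<phi> = foldr (\<lambda>c \<psi>. FImp (clause_fml (fst (snd c)) (snd (snd c))) \<psi>) ws \<phi>"

lemma eval_imps: "eval v (imps ws \<phi>) =
   ((\<forall>c\<in>set ws. eval v (clause_fml (fst (snd c)) (snd (snd c)))) \<longrightarrow> eval v \<phi>)"
  unfolding imps_def by (induction ws) auto

lemma imps_deriv: "pl_deriv R (imps ws \<phi>) \<delta> \<Longrightarrow> set ws \<subseteq> {c\<in>R. \<gamma> \<le> fst c} \<Longrightarrow> \<gamma> \<le> \<delta>
   \<Longrightarrow> pl_deriv R \<phi> \<gamma>"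
proof (induction ws arbitrary: \<delta>)
  case Nil
  then show ?case using pl_weaken[of R \<phi> \<delta> \<delta> \<gamma>] by (simp add: imps_def)
next
  case (Cons c ws)
  obtain \<alpha> A Bp where c: "c = (\<alpha>, A, Bp)" by (cases c) auto
  have cR: "(\<alpha>, A, Bp) \<in> R" "\<gamma> \<le> \<alpha>" using Cons.prems c by auto
  have "pl_deriv R (FImp (clause_fml A Bp) (imps ws \<phi>)) \<delta>"
    using Cons.prems(1) c by (simp add: imps_def)
  from pl_mp[OF pl_clause[OF cR(1)] this] have "pl_deriv R (imps ws \<phi>) (inf \<alpha> \<delta>)" .
  then show ?case using Cons.IH Cons.prems cR(2) by auto
qed

lemma pl_complete:
  assumes "finite R" "ent R \<gamma> \<phi>"
  shows "pl_deriv R \<phi> \<gamma>"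
proof -
  obtain ws where ws: "set ws = {c\<in>R. \<gamma> \<le> fst c}"
    using finite_list[of "{c\<in>R. \<gamma> \<le> fst c}"] assms(1) by auto
  have "tautology (imps ws \<phi>)"
    using assms(2) ws unfolding tautology_def ent_def eval_imps by blast
  then have "pl_deriv R (imps ws \<phi>) top" by (rule pl_axiom)
  then show ?thesis using imps_deriv[of R ws \<phi> top \<gamma>] ws by simp
qed

subsection \<open>Resolution\<close>

definition rsat :: "('a lit set \<times> 'q::order) set \<Rightarrow> 'q \<Rightarrow> ('a \<Rightarrow> bool) \<Rightarrow> bool" where
  "rsat K \<gamma> v \<longleftrightarrow> (\<forall>p\<in>K. \<gamma> \<le> snd p \<longrightarrow> lsat v (fst p))"

lemma res_sound: "res_deriv C c \<beta> \<Longrightarrow> rsat C \<beta> v \<Longrightarrow> lsat v c"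
proof (induction rule: res_deriv.induct)
  case (res_base c \<alpha>)
  then show ?case unfolding rsat_def by fastforce
next
  case (res_step c1 \<alpha>1 c2 \<alpha>2 x)
  have "rsat C \<alpha>1 v" "rsat C \<alpha>2 v" using res_step.prems unfolding rsat_def
    by (meson le_infI1 le_infI2)+
  then have l1: "lsat v c1" and l2: "lsat v c2" using res_step.IH by auto
  show ?case
  proof (cases "v x")
    case True
    from l2 obtain l where "l \<in> c2" "lval v l" unfolding lsat_def by auto
    then have "l \<noteq> Neg x" using True by auto
    then show ?thesis using \<open>l \<in> c2\<close> \<open>lval v l\<close> unfolding lsat_def by auto
  next
    case False
    from l1 obtain l where "l \<in> c1" "lval v l" unfolding lsat_def by auto
    then have "l \<noteq> Pos x" using False by auto
    then show ?thesis using \<open>l \<in> c1\<close> \<open>lval v l\<close> unfolding lsat_def by auto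
  qed
qed

lemma res_mono: "res_deriv K c \<beta> \<Longrightarrow> K \<subseteq> C \<Longrightarrow> res_deriv C c \<beta>"
  by (induction rule: res_deriv.induct) (auto intro: res_deriv.intros)

lemma res_bound: "res_deriv K c \<beta> \<Longrightarrow> \<forall>p\<in>K. \<gamma> \<le> snd p \<Longrightarrow> \<gamma> \<le> \<beta>"
  by (induction rule: res_deriv.induct) auto

definition atoms :: "('a lit set \<times> 'q) set \<Rightarrow> 'a set" where
  "atoms K = (\<Union>p\<in>K. atm ` fst p)"

lemma lval_upd: "atm l \<noteq> x \<Longrightarrow> lval (v(x := b)) l = lval v l"
  by (cases l) auto

lemma lift_pos:
  "res_deriv {(d - {Neg x}, \<alpha>) | d \<alpha>. (d, \<alpha>) \<in> K \<and> Pos x \<notin> d} c \<beta> \<Longrightarrow>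
   Pos x \<notin> c \<and> Neg x \<notin> c \<and> (\<exists>c'. res_deriv K c' \<beta> \<and> (c' = c \<or> c' = insert (Neg x) c))"
proof (induction rule: res_deriv.induct)
  case (res_base c \<alpha>)
  then obtain d where d: "c = d - {Neg x}" "(d, \<alpha>) \<in> K" "Pos x \<notin> d" by auto
  have "d = c \<or> d = insert (Neg x) c" using d by auto
  then show ?case using d res_deriv.res_base[OF d(2)] by auto
next
  case (res_step c1 \<alpha>1 c2 \<alpha>2 y)
  then obtain c1' c2' where c': "res_deriv K c1' \<alpha>1" "c1' = c1 \<or> c1' = insert (Neg x) c1"
    "res_deriv K c2' \<alpha>2" "c2' = c2 \<or> c2' = insert (Neg x) c2" by blast
  have yx: "y \<noteq> x" using res_step by auto
  have "res_deriv K ((c1' - {Pos y}) \<union> (c2' - {Neg y})) (inf \<alpha>1 \<alpha>2)"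
    using c' res_step.hyps by (intro res_deriv.res_step) auto
  moreover have "(c1' - {Pos y}) \<union> (c2' - {Neg y}) = (c1 - {Pos y}) \<union> (c2 - {Neg y}) \<or>
    (c1' - {Pos y}) \<union> (c2' - {Neg y}) = insert (Neg x) ((c1 - {Pos y}) \<union> (c2 - {Neg y}))"
    using c'(2,4) yx by auto
  ultimately show ?case using res_step.IH by blast
qed

lemma lift_neg:
  "res_deriv {(d - {Pos x}, \<alpha>) | d \<alpha>. (d, \<alpha>) \<in> K \<and> Neg x \<notin> d} c \<beta> \<Longrightarrow>
   Pos x \<notin> c \<and> Neg x \<notin> c \<and> (\<exists>c'. res_deriv K c' \<beta> \<and> (c' = c \<or> c' = insert (Pos x) c))"
proof (induction rule: res_deriv.induct)
  case (res_base c \<alpha>)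
  then obtain d where d: "c = d - {Pos x}" "(d, \<alpha>) \<in> K" "Neg x \<notin> d" by auto
  have "d = c \<or> d = insert (Pos x) c" using d by auto
  then show ?case using d res_deriv.res_base[OF d(2)] by auto
next
  case (res_step c1 \<alpha>1 c2 \<alpha>2 y)
  then obtain c1' c2' where c': "res_deriv K c1' \<alpha>1" "c1' = c1 \<or> c1' = insert (Pos x) c1"
    "res_deriv K c2' \<alpha>2" "c2' = c2 \<or> c2' = insert (Pos x) c2" by blast
  have yx: "y \<noteq> x" using res_step by auto
  have "res_deriv K ((c1' - {Pos y}) \<union> (c2' - {Neg y})) (inf \<alpha>1 \<alpha>2)"
    using c' res_step.hyps by (intro res_deriv.res_step) auto
  moreover have "(c1' - {Pos y}) \<union> (c2' - {Neg y}) = (c1 - {Pos y}) \<union> (c2 - {Neg y}) \<or>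
    (c1' - {Pos y}) \<union> (c2' - {Neg y}) = insert (Pos x) ((c1 - {Pos y}) \<union> (c2 - {Neg y}))"
    using c'(2,4) yx by auto
  ultimately show ?case using res_step.IH by blast
qed

lemma res_complete:
  fixes K :: "('a lit set \<times> 'q::{finite,lattice,order_top}) set"
  shows "finite X \<Longrightarrow> atoms K \<subseteq> X \<Longrightarrow> \<forall>v. \<exists>p\<in>K. \<not> lsat v (fst p) \<Longrightarrow> \<exists>\<beta>. res_deriv K {} \<beta>"
proof (induction X arbitrary: K rule: finite_induct)
  case empty
  then obtain p where p: "p \<in> K" by blast
  then have "fst p = {}" using empty.prems(1) unfolding atoms_def by auto
  then have "({}, snd p) \<in> K" using p by (metis prod.collapse)
  then have "res_deriv K {} (snd p)" by (rule res_deriv.res_base)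
  then show ?case by blast
next
  case (insert x X)
  define Kp where "Kp = {(d - {Neg x}, \<alpha>) | d \<alpha>. (d, \<alpha>) \<in> K \<and> Pos x \<notin> d}"
  define Kn where "Kn = {(d - {Pos x}, \<alpha>) | d \<alpha>. (d, \<alpha>) \<in> K \<and> Neg x \<notin> d}"
  have aKp: "atoms Kp \<subseteq> X"
  proof
    fix y assume "y \<in> atoms Kp"
    then obtain d \<alpha> l where "(d, \<alpha>) \<in> K" "Pos x \<notin> d" "l \<in> d" "l \<noteq> Neg x" "y = atm l"
      unfolding Kp_def atoms_def by auto
    moreover then have "atm l \<in> insert x X" using insert.prems(1) unfolding atoms_def by force
    ultimately show "y \<in> X" by (cases l) auto
  qed
  have aKn: "atoms Kn \<subseteq> X"
  proof
    fix y assume "y \<in> atoms Kn"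
    then obtain d \<alpha> l where "(d, \<alpha>) \<in> K" "Neg x \<notin> d" "l \<in> d" "l \<noteq> Pos x" "y = atm l"
      unfolding Kn_def atoms_def by auto
    moreover then have "atm l \<in> insert x X" using insert.prems(1) unfolding atoms_def by force
    ultimately show "y \<in> X" by (cases l) auto
  qed
  have uKp: "\<forall>v. \<exists>p\<in>Kp. \<not> lsat v (fst p)"
  proof
    fix v
    obtain p where p: "p \<in> K" "\<not> lsat (v(x := True)) (fst p)" using insert.prems(2) by blast
    have px: "Pos x \<notin> fst p" using p(2) unfolding lsat_def by force
    have "(fst p - {Neg x}, snd p) \<in> Kp" using p px unfolding Kp_def by force
    moreover have "\<not> lsat v (fst p - {Neg x})"
    proof
      assume "lsat v (fst p - {Neg x})"
      then obtain l where l: "l \<in> fst p" "l \<noteq> Neg x" "lval v l" unfolding lsat_def by auto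
      then have "atm l \<noteq> x" using px by (cases l) auto
      then have "lval (v(x := True)) l" using l lval_upd by metis
      then show False using p(2) l unfolding lsat_def by auto
    qed
    ultimately show "\<exists>p\<in>Kp. \<not> lsat v (fst p)" by force
  qed
  have uKn: "\<forall>v. \<exists>p\<in>Kn. \<not> lsat v (fst p)"
  proof
    fix v
    obtain p where p: "p \<in> K" "\<not> lsat (v(x := False)) (fst p)" using insert.prems(2) by blast
    have px: "Neg x \<notin> fst p" using p(2) unfolding lsat_def by force
    have "(fst p - {Pos x}, snd p) \<in> Kn" using p px unfolding Kn_def by force
    moreover have "\<not> lsat v (fst p - {Pos x})"
    proof
      assume "lsat v (fst p - {Pos x})"
      then obtain l where l: "l \<in> fst p" "l \<noteq> Pos x" "lval v l" unfolding lsat_def by auto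
      then have "atm l \<noteq> x" using px by (cases l) auto
      then have "lval (v(x := False)) l" using l lval_upd by metis
      then show False using p(2) l unfolding lsat_def by auto
    qed
    ultimately show "\<exists>p\<in>Kn. \<not> lsat v (fst p)" by force
  qed
  obtain b1 where "res_deriv Kp {} b1" using insert.IH[OF aKp uKp] by blast
  then obtain c1 where c1: "res_deriv K c1 b1" "c1 = {} \<or> c1 = {Neg x}"
    using lift_pos[of x K "{}" b1] unfolding Kp_def by auto
  obtain b2 where "res_deriv Kn {} b2" using insert.IH[OF aKn uKn] by blast
  then obtain c2 where c2: "res_deriv K c2 b2" "c2 = {} \<or> c2 = {Pos x}"
    using lift_neg[of x K "{}" b2] unfolding Kn_def by auto
  show ?case
  proof (cases "c1 = {} \<or> c2 = {}")
    case True
    then show ?thesis using c1 c2 by blast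
  next
    case False
    then have "c1 = {Neg x}" "c2 = {Pos x}" using c1 c2 by auto
    then have "res_deriv K (({Pos x} - {Pos x}) \<union> ({Neg x} - {Neg x})) (inf b2 b1)"
      using c1 c2 by (intro res_deriv.res_step) auto
    then show ?thesis by auto
  qed
qed

definition fin_rules :: "('q \<times> 'a set \<times> 'a set) set \<Rightarrow> bool" where
  "fin_rules R \<longleftrightarrow> finite R \<and> (\<forall>c\<in>R. finite (fst (snd c)) \<and> finite (snd (snd c)))"

lemma refut_to_ent:
  fixes R :: "('q::{finite,lattice,order_top} \<times> 'a set \<times> 'a set) set"
  assumes fr: "fin_rules R"
    and r: "res_deriv (poss_disj ` R \<union> {({Neg a}, top)}) {} \<beta>"
  shows "ent R \<beta> (FAtom a)"
  unfolding ent_def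
proof (intro allI impI)
  fix v assume h: "\<forall>c\<in>R. \<beta> \<le> fst c \<longrightarrow> eval v (clause_fml (fst (snd c)) (snd (snd c)))"
  show "eval v (FAtom a)"
  proof (rule ccontr)
    assume na: "\<not> eval v (FAtom a)"
    have "rsat (poss_disj ` R \<union> {({Neg a}, top)}) \<beta> v"
      unfolding rsat_def
    proof (intro ballI impI)
      fix p assume p: "p \<in> poss_disj ` R \<union> {({Neg a}, top)}" "\<beta> \<le> snd p"
      show "lsat v (fst p)"
      proof (cases "p = ({Neg a}, top)")
        case True
        then show ?thesis using na unfolding lsat_def by auto
      next
        case False
        then obtain \<alpha> A Bp where c: "(\<alpha>, A, Bp) \<in> R" "p = poss_disj (\<alpha>, A, Bp)" using p by auto
        then have pa: "snd p = \<alpha>" by (simp add: poss_disj_def)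
        have fin: "finite A" "finite Bp" using fr c(1) unfolding fin_rules_def by auto
        have "eval v (clause_fml A Bp)" using h c(1) p(2) pa by fastforce
        then have "(\<exists>x\<in>A. v x) \<or> (\<exists>b\<in>Bp. \<not> v b)" using eval_clause[OF fin] by auto
        then show ?thesis using lsat_poss_disj[of \<alpha> A Bp "fst p" "snd p" v] c(2) by simp
      qed
    qed
    then have "lsat v {}" using res_sound[OF r] by blast
    then show False unfolding lsat_def by auto
  qed
qed

lemma ent_to_refut:
  fixes R :: "('q::{finite,lattice,order_top} \<times> 'a set \<times> 'a set) set"
  assumes fr: "fin_rules R"
    and e: "ent R \<gamma> (FAtom a)"
  shows "\<exists>\<beta>. \<gamma> \<le> \<beta> \<and> res_deriv (poss_disj ` R \<union> {({Neg a}, top)}) {} \<beta>"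
proof -
  let ?C = "poss_disj ` R \<union> {({Neg a}, top)}"
  define K where "K = {p\<in>?C. \<gamma> \<le> snd p}"
  have finC: "finite ?C" using fr unfolding fin_rules_def by auto
  have fincl: "\<forall>p\<in>?C. finite (fst p)"
    using fr unfolding fin_rules_def poss_disj_def by auto
  have finA: "finite (atoms K)" unfolding atoms_def K_def
  proof (rule finite_UN_I)
    show "finite {p \<in> ?C. \<gamma> \<le> snd p}" using finC by auto
    show "\<And>p. p \<in> {p \<in> ?C. \<gamma> \<le> snd p} \<Longrightarrow> finite (atm ` fst p)" using fincl by blast
  qed
  have uns: "\<forall>v. \<exists>p\<in>K. \<not> lsat v (fst p)"
  proof
    fix v
    show "\<exists>p\<in>K. \<not> lsat v (fst p)"
    proof (rule ccontr)
      assume "\<not> ?thesis"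
      then have all: "\<forall>p\<in>K. lsat v (fst p)" by blast
      have "({Neg a}, top) \<in> K" unfolding K_def by auto
      then have nva: "\<not> v a" using all unfolding lsat_def by auto
      have "\<forall>c\<in>R. \<gamma> \<le> fst c \<longrightarrow> eval v (clause_fml (fst (snd c)) (snd (snd c)))"
      proof (intro ballI impI)
        fix c assume c: "c \<in> R" "\<gamma> \<le> fst c"
        obtain \<alpha> A Bp where cc: "c = (\<alpha>, A, Bp)" by (cases c) auto
        have cR: "(\<alpha>, A, Bp) \<in> R" "\<gamma> \<le> \<alpha>" using c cc by auto
        have fin: "finite A" "finite Bp" using fr c(1) cc unfolding fin_rules_def by auto
        have "poss_disj c \<in> K" 
        proof -
          have "poss_disj c \<in> ?C" using c(1) by blast
          moreover have "snd (poss_disj c) = \<alpha>" using cc by (simp add: poss_disj_def)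
          ultimately show ?thesis using cR(2) unfolding K_def by simp
        qed
        then have "lsat v (fst (poss_disj c))" using all by blast
        then have "(\<exists>x\<in>A. v x) \<or> (\<exists>b\<in>Bp. \<not> v b)"
          using lsat_poss_disj[of \<alpha> A Bp "fst (poss_disj c)" "snd (poss_disj c)" v] cc by simp
        then show "eval v (clause_fml (fst (snd c)) (snd (snd c)))"
          using eval_clause[OF fin] cc by auto
      qed
      then have "v a" using e unfolding ent_def by auto
      then show False using nva by simp
    qed
  qed
  obtain \<beta> where b: "res_deriv K {} \<beta>" using res_complete[OF finA order_refl uns] by blast
  have "\<gamma> \<le> \<beta>" using res_bound[OF b, of \<gamma>] unfolding K_def by auto
  moreover have "res_deriv ?C {} \<beta>" using res_mono[OF b] unfolding K_def by auto
  ultimately show ?thesis by blast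
qed

lemma fin_reduct:
  assumes "poss_program N" shows "fin_rules (poss_reduct N S)"
proof -
  have "poss_reduct N S \<subseteq> (\<lambda>(\<alpha>, A, Bp, Bn). (\<alpha>, A \<inter> S, Bp)) ` N"
    unfolding poss_reduct_def by force
  then have "finite (poss_reduct N S)"
    using assms unfolding poss_program_def by (meson finite_imageI finite_subset)
  moreover have "\<forall>c\<in>poss_reduct N S. finite (fst (snd c)) \<and> finite (snd (snd c))"
    using assms unfolding poss_program_def poss_reduct_def by fastforce
  ultimately show ?thesis unfolding fin_rules_def by auto
qed

lemma max_equiv:
  assumes "poss_program N"
  shows "is_maximal_in \<alpha> (refutation_values N S a) \<longleftrightarrow>
    (ent (poss_reduct N S) \<alpha> (FAtom a) \<and> (\<forall>\<beta>. ent (poss_reduct N S) \<beta> (FAtom a) \<longrightarrow> \<not> \<alpha> < \<beta>))"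
proof -
  have fr: "fin_rules (poss_reduct N S)" using fin_reduct[OF assms] .
  let ?E = "{\<gamma>. ent (poss_reduct N S) \<gamma> (FAtom a)}"
  have sub: "refutation_values N S a \<subseteq> ?E"
    unfolding refutation_values_def using refut_to_ent[OF fr] by auto
  have up: "\<forall>\<gamma>\<in>?E. \<exists>\<beta>\<in>refutation_values N S a. \<gamma> \<le> \<beta>"
    unfolding refutation_values_def using ent_to_refut[OF fr] by auto
  show ?thesis
  proof
    assume m: "is_maximal_in \<alpha> (refutation_values N S a)"
    then have aR: "\<alpha> \<in> refutation_values N S a" unfolding is_maximal_in_def by auto
    show "ent (poss_reduct N S) \<alpha> (FAtom a) \<and> (\<forall>\<beta>. ent (poss_reduct N S) \<beta> (FAtom a) \<longrightarrow> \<not> \<alpha> < \<beta>)"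
    proof (intro conjI allI impI notI)
      show "ent (poss_reduct N S) \<alpha> (FAtom a)" using aR sub by auto
    next
      fix \<beta> assume "ent (poss_reduct N S) \<beta> (FAtom a)" "\<alpha> < \<beta>"
      then obtain \<beta>' where "\<beta>' \<in> refutation_values N S a" "\<beta> \<le> \<beta>'" using up by auto
      then show False using m \<open>\<alpha> < \<beta>\<close> unfolding is_maximal_in_def
        using order_less_le_trans by blast
    qed
  next
    assume h: "ent (poss_reduct N S) \<alpha> (FAtom a) \<and> (\<forall>\<beta>. ent (poss_reduct N S) \<beta> (FAtom a) \<longrightarrow> \<not> \<alpha> < \<beta>)"
    then obtain \<beta> where b: "\<beta> \<in> refutation_values N S a" "\<alpha> \<le> \<beta>" using up by auto
    then have "\<alpha> = \<beta>" using h sub by (metis mem_Collect_eq order_le_less subsetD)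
    then show "is_maximal_in \<alpha> (refutation_values N S a)"
      unfolding is_maximal_in_def using b h sub by auto
  qed
qed

lemma answer_set_antichain:
  assumes "answer_set N S" "answer_set N S'" "S \<subseteq> S'"
  shows "S = S'"
proof (rule ccontr)
  assume "S \<noteq> S'"
  then have lt: "S \<subset> S'" using assms(3) by auto
  have "gl_reduct N S' \<subseteq> gl_reduct N S" unfolding gl_reduct_def using assms(3) by blast
  moreover have "is_model (gl_reduct N S) S" using assms(1) unfolding answer_set_def by auto
  ultimately have "is_model (gl_reduct N S') S" unfolding is_model_def by blast
  then show False using assms(2) lt unfolding answer_set_def by auto
qed

theorem proposition8:
  fixes N :: "('q::{finite,lattice,order_top}, 'a) poss_clause set"
  assumes "poss_program N"
  shows "poss_answer_sets_proc N = {M. poss_answer_set N M}"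
proof (intro set_eqI iffI)
  fix M assume "M \<in> poss_answer_sets_proc N"
  then obtain S where as: "answer_set N S" and u: "\<forall>a \<in> S. \<exists>!\<alpha>. (a, \<alpha>) \<in> M"
    and m: "\<forall>(a, \<alpha>) \<in> M. a \<in> S \<and> is_maximal_in \<alpha> (refutation_values N S a)"
    unfolding poss_answer_sets_proc_def by blast
  have fM: "fst ` M = S" using u m by force
  have ps: "is_PS M" unfolding is_PS_def using u m by blast
  have entM: "\<And>a \<gamma>. (a, \<gamma>) \<in> M \<Longrightarrow> ent (poss_reduct N S) \<gamma> (FAtom a)"
    using m max_equiv[OF assms] by blast
  have pe: "poss_entails N M" unfolding poss_entails_def fM
    using as entM pl_complete fin_reduct[OF assms] unfolding fin_rules_def by blast
  have nomax: "\<not> (\<exists>M''. is_PS M'' \<and> M'' \<noteq> M \<and> poss_le M M'' \<and> poss_entails N M'')"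
  proof
    assume "\<exists>M''. is_PS M'' \<and> M'' \<noteq> M \<and> poss_le M M'' \<and> poss_entails N M''"
    then obtain M'' where M'': "is_PS M''" "M'' \<noteq> M" "poss_le M M''" "poss_entails N M''" by blast
    have "answer_set N (fst ` M'')" using M''(4) unfolding poss_entails_def by auto
    moreover have "S \<subseteq> fst ` M''" using M''(3) fM unfolding poss_le_def by auto
    ultimately have fM'': "fst ` M'' = S" using answer_set_antichain[OF as] by blast
    obtain x \<gamma> \<delta> where xgd: "(x, \<gamma>) \<in> M" "(x, \<delta>) \<in> M''" "\<gamma> \<noteq> \<delta>"
    proof -
      show thesis
      proof (cases "M \<subseteq> M''")
        case True
        then obtain p where p: "p \<in> M''" "p \<notin> M" using M''(2) by blast
        then have "fst p \<in> fst ` M" using fM fM'' by auto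
        then obtain \<gamma> where "(fst p, \<gamma>) \<in> M" by force
        then show thesis using that[of "fst p" \<gamma> "snd p"] p by (metis prod.collapse)
      next
        case False
        then obtain p where p: "p \<in> M" "p \<notin> M''" by blast
        then have "fst p \<in> fst ` M''" using fM fM'' by auto
        then obtain \<delta> where "(fst p, \<delta>) \<in> M''" by force
        then show thesis using that[of "fst p" "snd p" \<delta>] p by (metis prod.collapse)
      qed
    qed
    have "\<gamma> \<le> \<delta>" using M''(3) xgd unfolding poss_le_def by blast
    then have lt: "\<gamma> < \<delta>" using xgd(3) by auto
    have "pl_deriv (poss_reduct N S) (FAtom x) \<delta>" using M''(4) xgd(2) fM''
      unfolding poss_entails_def by blast
    then have "ent (poss_reduct N S) \<delta> (FAtom x)" by (rule pl_sound)
    moreover have "is_maximal_in \<gamma> (refutation_values N S x)" using m xgd(1) by blast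
    ultimately show False using lt max_equiv[OF assms] by blast
  qed
  show "M \<in> {M. poss_answer_set N M}"
    unfolding poss_answer_set_def using ps as fM pe nomax by auto
next
  fix M assume "M \<in> {M. poss_answer_set N M}"
  then have ps: "is_PS M" and as: "answer_set N (fst ` M)" and pe: "poss_entails N M"
    and nomax: "\<not> (\<exists>M''. is_PS M'' \<and> M'' \<noteq> M \<and> poss_le M M'' \<and> poss_entails N M'')"
    unfolding poss_answer_set_def by auto
  define S where "S = fst ` M"
  have fr: "finite (poss_reduct N S)" using fin_reduct[OF assms] unfolding fin_rules_def by auto
  have u: "\<forall>a \<in> S. \<exists>!\<alpha>. (a, \<alpha>) \<in> M" using ps unfolding S_def is_PS_def by force
  have m: "\<forall>(a, \<alpha>) \<in> M. a \<in> S \<and> is_maximal_in \<alpha> (refutation_values N S a)"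
  proof (clarify)
    fix a \<alpha> assume aM: "(a, \<alpha>) \<in> M"
    have aS: "a \<in> S" using aM unfolding S_def by force
    have ea: "ent (poss_reduct N S) \<alpha> (FAtom a)"
      using pe aM pl_sound unfolding poss_entails_def S_def by blast
    have "\<forall>\<beta>. ent (poss_reduct N S) \<beta> (FAtom a) \<longrightarrow> \<not> \<alpha> < \<beta>"
    proof (intro allI impI notI)
      fix \<beta> assume eb: "ent (poss_reduct N S) \<beta> (FAtom a)" and lt: "\<alpha> < \<beta>"
      define M'' where "M'' = insert (a, \<beta>) (M - {(a, \<alpha>)})"
      have "is_PS M''" using ps aM unfolding is_PS_def M''_def by blast
      moreover have "M'' \<noteq> M"
      proof
        assume "M'' = M"
        then have "(a, \<beta>) \<in> M" unfolding M''_def by auto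
        then show False using ps aM lt unfolding is_PS_def by blast
      qed
      moreover have fM'': "fst ` M'' = fst ` M" unfolding M''_def using aM by force
      moreover have "poss_le M M''"
        unfolding poss_le_def
      proof (intro conjI allI impI)
        show "fst ` M \<subseteq> fst ` M''" using fM'' by simp
      next
        fix x \<gamma> \<delta> assume "(x, \<gamma>) \<in> M" "(x, \<delta>) \<in> M''"
        then show "\<gamma> \<le> \<delta>" using ps aM lt unfolding M''_def is_PS_def
          by (metis insert_iff less_imp_le order_refl prod.inject DiffD1)
      qed
      moreover have "poss_entails N M''"
        unfolding poss_entails_def
      proof (intro conjI ballI)
        show "answer_set N (fst ` M'')" using as fM'' by simp
      next
        fix p assume p: "p \<in> M''"
        show "case p of (b, \<gamma>) \<Rightarrow> pl_deriv (poss_reduct N (fst ` M'')) (FAtom b) \<gamma>"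
        proof (cases "p = (a, \<beta>)")
          case True
          then show ?thesis using pl_complete[OF fr eb] fM'' unfolding S_def by simp
        next
          case False
          then have "p \<in> M" using p unfolding M''_def by auto
          then show ?thesis using pe fM'' unfolding poss_entails_def by auto
        qed
      qed
      ultimately show False using nomax by blast
    qed
    then show "a \<in> S \<and> is_maximal_in \<alpha> (refutation_values N S a)"
      using aS ea max_equiv[OF assms] by blast
  qed
  show "M \<in> poss_answer_sets_proc N"
    unfolding poss_answer_sets_proc_def using as u m unfolding S_def by blast
qed

end
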